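(* Let $b_1,\dots,b_k$ be positive integers and $n_1,\dots,n_k$ integers with $\sum_in_ib_i=0$, and let $\alpha^{\mathfrak a}=\prod_{i=1}^k\big(c^{\mathfrak a}_1\cdots c^{\mathfrak a}_{b_i}\big)^{n_i}$. Then for every odd $m\ge3$, $$\frac{\delta_m\alpha^{\mathfrak a}}{\alpha^{\mathfrak a}}=-\frac{T^m}{m}\sum_{i=1}^kn_ib_i^m.$$
   Context: $\mathcal M^{(1)}=\mathbb Q[\zeta^{\mathfrak a}(3),\zeta^{\mathfrak a}(5),\dots]$ is the free polynomial subalgebra of depth-one motivic MZVs in $\mathcal A=\mathcal H/\zeta^{\mathfrak m}(2)\mathcal H$; $\zeta^{\mathfrak a}(k)=0$ for even $k$. For odd $m\ge3$, $\delta_m$ is the continuous $\mathbb Q((T))$-linear derivation $\partial/\partial\zeta^{\mathfrak a}(m)$ of $\mathcal M^{(1)}((T))$. $H^{\mathfrak a}(n)=(-1)^n\sum_{j\ge1}\binom{n+j-1}{n-1}\zeta^{\mathfrak a}(n+j)T^j$; $H^{\mathfrak a}(1^0)=1$, $H^{\mathfrak a}(1^n)=\frac1n\sum_{i=1}^n(-1)^{i-1}H^{\mathfrak a}(i)H^{\mathfrak a}(1^{n-i})$; $c_n^{\mathfrak a}=n\sum_{j\ge0}(n-1)^jT^jH^{\mathfrak a}(1^j)$ for $n\ge1$ (invertible in $\mathcal M^{(1)}[[T]]$). *)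

theory Defs
  imports "HOL-Library.Poly_Mapping" "HOL-Computational_Algebra.Formal_Power_Series"
begin

text \<open>The free polynomial algebra over Q in the variables zeta(k), k in nat.
  A monomial is a finitely supported exponent vector nat =>0 nat (variable k
  stands for zeta^a(k)); a polynomial is a finitely supported map from
  monomials to Q, with the convolution product of Poly_Mapping.
  M^(1) = Q[zeta^a(3), zeta^a(5), ...] is the subalgebra generated by the
  odd-indexed variables with index >= 3.\<close>
type_synonym M1 = "(nat \<Rightarrow>\<^sub>0 nat) \<Rightarrow>\<^sub>0 rat"

definition mconst :: "rat \<Rightarrow> M1" where
  "mconst r = Poly_Mapping.single 0 r"

definition zeta_a :: "nat \<Rightarrow> M1" where
  "zeta_a k = (if odd k \<and> 3 \<le> k then Poly_Mapping.single (Poly_Mapping.single k 1) 1 else 0)"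

definition var_mon :: "nat \<Rightarrow> (nat \<Rightarrow>\<^sub>0 nat)" where
  "var_mon m = Poly_Mapping.single m 1"

definition pderiv_var :: "nat \<Rightarrow> M1 \<Rightarrow> M1" where
  "pderiv_var m p = Abs_poly_mapping
     (\<lambda>mon. of_nat (Poly_Mapping.lookup mon m + 1) * Poly_Mapping.lookup p (mon + var_mon m))"

text \<open>delta_m on power series in T with coefficients in M^(1): the continuous
  Q((T))-linear extension of d/d zeta^a(m), i.e. acting coefficientwise.\<close>
definition delta :: "nat \<Rightarrow> M1 fps \<Rightarrow> M1 fps" where
  "delta m f = Abs_fps (\<lambda>j. pderiv_var m (fps_nth f j))"

definition H_a :: "nat \<Rightarrow> M1 fps" where
  "H_a n = Abs_fps (\<lambda>j. if j = 0 then 0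
      else (-1) ^ n * of_nat ((n + j - 1) choose (n - 1)) * zeta_a (n + j))"

fun H1_a :: "nat \<Rightarrow> M1 fps" where
  "H1_a 0 = 1"
| "H1_a (Suc n) = fps_const (mconst (1 / of_nat (Suc n))) *
      (\<Sum>i = 1..Suc n. (-1) ^ (i - 1) * H_a i * H1_a (Suc n - i))"

text \<open>c_n = n * sum_{j>=0} (n-1)^j T^j H(1^j); coefficient of T^k collects j <= k.\<close>
definition c_a :: "nat \<Rightarrow> M1 fps" where
  "c_a n = Abs_fps (\<lambda>k. of_nat n * (\<Sum>j\<le>k. of_nat ((n - 1) ^ j) * (fps_nth (H1_a j) (k - j))))"

definition unit_inv :: "'a::comm_ring_1 \<Rightarrow> 'a" where
  "unit_inv x = (THE y. x * y = 1)"

definition int_pow :: "'a::comm_ring_1 \<Rightarrow> int \<Rightarrow> 'a" where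
  "int_pow x e = (if 0 \<le> e then x ^ nat e else unit_inv x ^ nat (- e))"

end

theory Submission
  imports Defs
begin

unbundle fps_syntax


lemma pm_induct[case_names zero add]:
  fixes p :: "'a \<Rightarrow>\<^sub>0 'b::comm_monoid_add"
  assumes "P 0" and "\<And>f a b. P f \<Longrightarrow> P (f + Poly_Mapping.single a b)"
  shows "P p"
proof (induction p rule: update_induct)
  case const then show ?case using assms(1) by simp
next
  case (update f a b)
  have "Poly_Mapping.update a b f = f + Poly_Mapping.single a b"
    by (rule poly_mapping_eqI) (use update(1) in \<open>auto simp: lookup_update lookup_add lookup_single in_keys_iff when_def\<close>)
  then show ?case using assms(2) update by simp
qed

lemma lookup_pderiv_var:
  "Poly_Mapping.lookup (pderiv_var m p) mon =
     of_nat (Poly_Mapping.lookup mon m + 1) * Poly_Mapping.lookup p (mon + var_mon m)"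
proof -
  have "{mon. of_nat (Poly_Mapping.lookup mon m + 1) * Poly_Mapping.lookup p (mon + var_mon m) \<noteq> (0::rat)}
        \<subseteq> (\<lambda>k. k - var_mon m) ` Poly_Mapping.keys p"
  proof
    fix x assume "x \<in> {mon. of_nat (Poly_Mapping.lookup mon m + 1) * Poly_Mapping.lookup p (mon + var_mon m) \<noteq> (0::rat)}"
    then have "x + var_mon m \<in> Poly_Mapping.keys p" by (auto simp: in_keys_iff)
    then show "x \<in> (\<lambda>k. k - var_mon m) ` Poly_Mapping.keys p"
      by (metis add_diff_cancel_right' image_eqI)
  qed
  then have "finite {mon. of_nat (Poly_Mapping.lookup mon m + 1) * Poly_Mapping.lookup p (mon + var_mon m) \<noteq> (0::rat)}"
    by (rule finite_subset) simp
  then show ?thesis unfolding pderiv_var_def by simp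
qed

lemma pderiv_var_add: "pderiv_var m (p + q) = pderiv_var m p + pderiv_var m q"
  by (rule poly_mapping_eqI) (simp add: lookup_pderiv_var lookup_add algebra_simps)

lemma pderiv_var_uminus: "pderiv_var m (- p) = - pderiv_var m p"
  by (rule poly_mapping_eqI) (simp add: lookup_pderiv_var)

lemma pderiv_var_diff: "pderiv_var m (p - q) = pderiv_var m p - pderiv_var m q"
  by (rule poly_mapping_eqI) (simp add: lookup_pderiv_var lookup_minus algebra_simps)

lemma pderiv_var_zero[simp]: "pderiv_var m 0 = 0"
  by (rule poly_mapping_eqI) (simp add: lookup_pderiv_var)

lemma pderiv_var_sum: "pderiv_var m (sum f A) = (\<Sum>x\<in>A. pderiv_var m (f x))"
  by (induction A rule: infinite_finite_induct) (auto simp: pderiv_var_add)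

lemma pderiv_var_single:
  "pderiv_var m (Poly_Mapping.single a c) =
     Poly_Mapping.single (a - var_mon m) (of_nat (Poly_Mapping.lookup a m) * c)"
proof (rule poly_mapping_eqI)
  fix mon
  show "Poly_Mapping.lookup (pderiv_var m (Poly_Mapping.single a c)) mon =
        Poly_Mapping.lookup (Poly_Mapping.single (a - var_mon m) (of_nat (Poly_Mapping.lookup a m) * c)) mon"
  proof (cases "a = mon + var_mon m")
    case True
    then show ?thesis
      by (simp add: lookup_pderiv_var lookup_single lookup_add var_mon_def)
  next
    case False
    have "a - var_mon m \<noteq> mon \<or> Poly_Mapping.lookup a m = 0"
    proof (rule ccontr)
      assume "\<not> ?thesis"
      then have h: "a - var_mon m = mon" "Poly_Mapping.lookup a m \<noteq> 0" by auto
      have "a = mon + var_mon m"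
        by (rule poly_mapping_eqI) (use h in \<open>auto simp: lookup_add lookup_minus var_mon_def lookup_single when_def\<close>)
      with False show False by simp
    qed
    then show ?thesis using False
      by (auto simp: lookup_pderiv_var lookup_single when_def)
  qed
qed



lemma sub_var_add:
  assumes "Poly_Mapping.lookup a m \<noteq> 0"
  shows "a - var_mon m + b = a + b - var_mon m"
  by (rule poly_mapping_eqI) (use assms in \<open>auto simp: lookup_add lookup_minus var_mon_def lookup_single when_def\<close>)

lemma pderiv_var_mult_single:
  "pderiv_var m (Poly_Mapping.single a c * Poly_Mapping.single b d) =
   pderiv_var m (Poly_Mapping.single a c) * Poly_Mapping.single b d +
   Poly_Mapping.single a c * pderiv_var m (Poly_Mapping.single b d)"
proof -
  have e1: "Poly_Mapping.single (a - var_mon m + b) (of_nat (Poly_Mapping.lookup a m) * c * d)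
      = Poly_Mapping.single (a + b - var_mon m) (of_nat (Poly_Mapping.lookup a m) * c * (d::rat))"
    by (cases "Poly_Mapping.lookup a m = 0") (simp_all add: sub_var_add)
  have e2: "Poly_Mapping.single (a + (b - var_mon m)) (c * (of_nat (Poly_Mapping.lookup b m) * d))
      = Poly_Mapping.single (a + b - var_mon m) (of_nat (Poly_Mapping.lookup b m) * c * (d::rat))"
  proof (cases "Poly_Mapping.lookup b m = 0")
    case False
    then have "a + (b - var_mon m) = a + b - var_mon m"
      using sub_var_add[of b m a] by (simp add: add.commute)
    then show ?thesis by (simp add: algebra_simps)
  qed simp
  have "pderiv_var m (Poly_Mapping.single a c) * Poly_Mapping.single b d +
   Poly_Mapping.single a c * pderiv_var m (Poly_Mapping.single b d) =
   Poly_Mapping.single (a - var_mon m + b) (of_nat (Poly_Mapping.lookup a m) * c * d) +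
   Poly_Mapping.single (a + (b - var_mon m)) (c * (of_nat (Poly_Mapping.lookup b m) * d))"
    by (simp add: pderiv_var_single mult_single)
  also have "\<dots> = Poly_Mapping.single (a + b - var_mon m)
     (of_nat (Poly_Mapping.lookup a m) * c * d + of_nat (Poly_Mapping.lookup b m) * c * d)"
    by (simp only: e1 e2 single_add)
  also have "\<dots> = pderiv_var m (Poly_Mapping.single a c * Poly_Mapping.single b d)"
    by (simp add: pderiv_var_single mult_single lookup_add algebra_simps)
  finally show ?thesis by simp
qed

lemma pderiv_var_mult:
  "pderiv_var m (p * q) = pderiv_var m p * q + p * pderiv_var m (q::M1)"
proof (induction p rule: pm_induct)
  case zero then show ?case by simp
next
  case (add f a c)
  have "pderiv_var m (Poly_Mapping.single a c * q) =
      pderiv_var m (Poly_Mapping.single a c) * q + Poly_Mapping.single a c * pderiv_var m q"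
  proof (induction q rule: pm_induct)
    case zero then show ?case by simp
  next
    case (add g b d)
    then show ?case
      by (simp add: distrib_left distrib_right pderiv_var_add pderiv_var_mult_single algebra_simps)
  qed
  with add show ?case
    by (simp add: distrib_left distrib_right pderiv_var_add algebra_simps)
qed



lemma pderiv_var_mconst[simp]: "pderiv_var m (mconst r) = 0"
  by (simp add: mconst_def pderiv_var_single)

lemma pderiv_var_one[simp]: "pderiv_var m 1 = 0"
  using pderiv_var_mconst[of m 1] by (simp add: mconst_def)

lemma pderiv_var_of_nat[simp]: "pderiv_var m (of_nat n) = 0"
  using pderiv_var_mconst[of m "of_nat n"] by (simp add: mconst_def single_of_nat)

lemma pderiv_var_const_mult:
  "pderiv_var m c = 0 \<Longrightarrow> pderiv_var m (c * x) = c * pderiv_var m (x::M1)"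
  by (simp add: pderiv_var_mult)

lemma pderiv_var_power0: "pderiv_var m c = 0 \<Longrightarrow> pderiv_var m (c ^ n) = 0"
  by (induction n) (simp_all add: pderiv_var_mult)

lemma pderiv_var_neg_one_power[simp]: "pderiv_var m ((-1) ^ n) = 0"
  by (rule pderiv_var_power0) (simp add: pderiv_var_uminus)

lemma pderiv_var_zeta:
  assumes "odd m" "3 \<le> m"
  shows "pderiv_var m (zeta_a k) = (if k = m then 1 else 0)"
proof (cases "odd k \<and> 3 \<le> k")
  case True
  then show ?thesis
    by (auto simp: zeta_a_def pderiv_var_single var_mon_def lookup_single)
next
  case False
  then have "k \<noteq> m" using assms by auto
  then show ?thesis using False by (auto simp: zeta_a_def)
qed

lemma mconst_add: "mconst (a + b) = mconst a + mconst b"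
  by (simp add: mconst_def single_add)
lemma mconst_mult: "mconst (a * b) = mconst a * mconst b"
  by (simp add: mconst_def mult_single)
lemma mconst_one[simp]: "mconst 1 = 1"
  by (simp add: mconst_def)
lemma mconst_zero[simp]: "mconst 0 = 0"
  by (simp add: mconst_def)
lemma mconst_of_nat: "mconst (of_nat n) = of_nat n"
  by (simp add: mconst_def single_of_nat)
lemma mconst_uminus: "mconst (- a) = - mconst a"
  by (simp add: mconst_def single_uminus)
lemma mconst_diff: "mconst (a - b) = mconst a - mconst b"
  by (simp add: mconst_def single_diff)
lemma mconst_sum: "mconst (sum f A) = (\<Sum>x\<in>A. mconst (f x))"
  by (induction A rule: infinite_finite_induct) (simp_all add: mconst_add)
lemma mconst_power: "mconst (a ^ n) = mconst a ^ n"
  by (induction n) (simp_all add: mconst_mult)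

lemma delta_nth[simp]: "delta m f $ j = pderiv_var m (f $ j)"
  by (simp add: delta_def)

lemma delta_add: "delta m (f + g) = delta m f + delta m g"
  by (rule fps_ext) (simp add: pderiv_var_add)
lemma delta_uminus: "delta m (- f) = - delta m f"
  by (rule fps_ext) (simp add: pderiv_var_uminus)
lemma delta_diff: "delta m (f - g) = delta m f - delta m g"
  by (rule fps_ext) (simp add: pderiv_var_diff)
lemma delta_zero[simp]: "delta m 0 = 0"
  by (rule fps_ext) simp
lemma delta_sum: "delta m (sum f A) = (\<Sum>x\<in>A. delta m (f x))"
  by (induction A rule: infinite_finite_induct) (simp_all add: delta_add)

lemma delta_mult: "delta m (f * g) = delta m f * g + f * delta m g"
  by (rule fps_ext) (simp add: fps_mult_nth pderiv_var_sum pderiv_var_mult sum.distrib)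

lemma delta_fps_const: "pderiv_var m c = 0 \<Longrightarrow> delta m (fps_const c) = 0"
  by (rule fps_ext) (simp add: fps_const_def)

lemma delta_one[simp]: "delta m 1 = 0"
  using delta_fps_const[of m 1] by simp

lemma delta_X_power[simp]: "delta m (fps_X ^ k) = 0"
  by (rule fps_ext) simp

lemma delta_of_nat[simp]: "delta m (of_nat n) = 0"
  using delta_fps_const[of m "of_nat n"] by (simp add: fps_of_nat)

lemma delta_const_mult:
  "delta m c = 0 \<Longrightarrow> delta m (c * x) = c * delta m x"
  by (simp add: delta_mult)



definition isunit :: "'a::comm_ring_1 \<Rightarrow> bool" where "isunit x \<longleftrightarrow> (\<exists>y. x * y = 1)"

lemma unit_inv_eq: "x * y = (1::'a::comm_ring_1) \<Longrightarrow> unit_inv x = y"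
  unfolding unit_inv_def
proof (rule the_equality)
  fix z assume "x * y = 1" "x * z = 1"
  then have "z = z * (x * y)" by simp
  also have "\<dots> = y * (x * z)" by (simp add: algebra_simps)
  finally show "z = y" using \<open>x * z = 1\<close> by simp
qed

lemma unit_inv_right: "isunit x \<Longrightarrow> x * unit_inv x = 1"
  unfolding isunit_def using unit_inv_eq by metis

lemma isunit_mult: "isunit x \<Longrightarrow> isunit y \<Longrightarrow> isunit (x * (y::'a::comm_ring_1))"
  unfolding isunit_def by (metis mult.assoc mult.commute mult_1_right)

lemma isunit_one: "isunit (1::'a::comm_ring_1)" unfolding isunit_def by auto

lemma isunit_power: "isunit x \<Longrightarrow> isunit (x ^ n :: 'a::comm_ring_1)"
  by (induction n) (simp_all add: isunit_one isunit_mult)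

lemma isunit_unit_inv: "isunit x \<Longrightarrow> isunit (unit_inv (x::'a::comm_ring_1))"
  unfolding isunit_def using unit_inv_right[unfolded isunit_def] by (metis mult.commute)

lemma isunit_int_pow: "isunit x \<Longrightarrow> isunit (int_pow (x::'a::comm_ring_1) e)"
  by (simp add: int_pow_def isunit_power isunit_unit_inv)

lemma isunit_prod: "(\<And>i. i \<in> A \<Longrightarrow> isunit (f i)) \<Longrightarrow> isunit (prod f A :: 'a::comm_ring_1)"
  by (induction A rule: infinite_finite_induct) (simp_all add: isunit_one isunit_mult)

lemma LD_mult: "delta m x = x * L \<Longrightarrow> delta m y = y * M \<Longrightarrow> delta m (x * y) = (x * y) * (L + M)"
  by (simp add: delta_mult algebra_simps)

lemma LD_power: "delta m x = x * L \<Longrightarrow> delta m (x ^ n) = x ^ n * (of_nat n * L)"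
proof (induction n)
  case 0 then show ?case by simp
next
  case (Suc n)
  then have "delta m (x ^ n * x) = (x ^ n * x) * (of_nat n * L + L)" by (intro LD_mult) auto
  then show ?case by (simp add: algebra_simps)
qed

lemma LD_inv: assumes "x * y = 1" "delta m x = x * L" shows "delta m y = y * (- L)"
proof -
  have "delta m (x * y) = x * L * y + x * delta m y" using assms(2) by (simp add: delta_mult)
  with assms(1) have "x * L * y + x * delta m y = 0" by simp
  then have "y * (x * L * y + x * delta m y) = 0" by simp
  then have "L * y * (x * y) + (x * y) * delta m y = 0" by (simp add: algebra_simps)
  then show ?thesis using assms(1) by (simp add: algebra_simps add_eq_0_iff)
qed

lemma LD_int_pow:
  assumes "isunit x" "delta m x = x * L"
  shows "delta m (int_pow x e) = int_pow x e * (of_int e * L)"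
proof (cases "0 \<le> e")
  case True
  then show ?thesis using LD_power[OF assms(2), of "nat e"] by (simp add: int_pow_def)
next
  case False
  have "delta m (unit_inv x) = unit_inv x * (- L)"
    by (rule LD_inv[OF unit_inv_right[OF assms(1)] assms(2)])
  from LD_power[OF this, of "nat (- e)"] False show ?thesis
    by (simp add: int_pow_def)
qed

lemma LD_prod:
  "(\<And>i. i \<in> A \<Longrightarrow> delta m (f i) = f i * L i) \<Longrightarrow> delta m (prod f A) = prod f A * sum L A"
proof (induction A rule: infinite_finite_induct)
  case (insert a A)
  then have "delta m (f a * prod f A) = (f a * prod f A) * (L a + sum L A)"
    by (intro LD_mult) auto
  then show ?case using insert by simp
qed simp_all



lemma delta_power0: "delta m c = 0 \<Longrightarrow> delta m (c ^ n) = 0"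
  by (induction n) (simp_all add: delta_mult)

lemma delta_neg_one_power[simp]: "delta m ((-1) ^ n :: M1 fps) = 0"
  by (rule delta_power0) (simp add: delta_uminus)

lemma delta_mconst[simp]: "delta m (fps_const (mconst r)) = 0"
  by (rule delta_fps_const) simp

lemma sum_swap_tri:
  fixes f :: "nat \<Rightarrow> nat \<Rightarrow> 'a::comm_monoid_add"
  shows "(\<Sum>i=1..j. \<Sum>l=1..j-i. f i l) = (\<Sum>l=1..j. \<Sum>i=1..j-l. f i l)"
proof -
  have "(\<Sum>i=1..j. \<Sum>l=1..j-i. f i l) = (\<Sum>(i,l)\<in>(SIGMA i:{1..j}. {1..j-i}). f i l)"
    by (rule sum.Sigma) auto
  also have "\<dots> = (\<Sum>(l,i)\<in>(SIGMA l:{1..j}. {1..j-l}). f i l)"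
    by (rule sum.reindex_bij_witness[where i="\<lambda>(l,i). (i,l)" and j="\<lambda>(i,l). (l,i)"]) auto
  also have "\<dots> = (\<Sum>l=1..j. \<Sum>i=1..j-l. f i l)"
    by (rule sum.Sigma[symmetric]) auto
  finally show ?thesis .
qed

lemma mconst_inv_nat: "n \<noteq> 0 \<Longrightarrow> of_nat n * mconst (1 / of_nat n) = 1"
  by (simp add: mconst_of_nat[symmetric] mconst_mult[symmetric])

lemma newton:
  "of_nat t * H1_a t = (\<Sum>i=1..t. (-1) ^ (i - 1) * H_a i * H1_a (t - i))"
proof (cases t)
  case 0 then show ?thesis by simp
next
  case (Suc n)
  have "(of_nat (Suc n) :: M1 fps) * fps_const (mconst (1 / of_nat (Suc n))) = 1"
    by (simp only: fps_of_nat[symmetric] fps_const_mult mconst_inv_nat) simp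
  then show ?thesis using Suc by (simp only: H1_a.simps mult.assoc[symmetric]) simp
qed

context
  fixes m :: nat
  assumes modd: "odd m" and m3: "3 \<le> m"
begin

definition kap :: "nat \<Rightarrow> M1" where
  "kap l = mconst (- of_nat (m choose l) / of_nat m)"

definition dd :: "nat \<Rightarrow> M1 fps" where
  "dd l = (if 1 \<le> l \<and> l < m then fps_X ^ (m - l) * fps_const (kap l) else 0)"

lemma delta_H:
  assumes "1 \<le> i"
  shows "delta m (H_a i) = (if i < m then fps_X ^ (m - i) * fps_const ((-1) ^ i * of_nat ((m - 1) choose (i - 1))) else 0)"
proof (rule fps_ext)
  fix j
  have z: "pderiv_var m (zeta_a (i + j)) = (if i + j = m then 1 else 0)"
    using pderiv_var_zeta[OF modd m3] by simp
  show "delta m (H_a i) $ j = (if i < m then fps_X ^ (m - i) * fps_const ((-1) ^ i * of_nat ((m - 1) choose (i - 1))) else 0) $ j"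
    using assms
    by (auto simp: H_a_def fps_X_power_mult_nth z pderiv_var_mult)
qed

lemma delta_H_dd:
  assumes "1 \<le> i"
  shows "(-1) ^ (i - 1) * delta m (H_a i) = of_nat i * dd i"
proof (cases "i < m")
  case True
  have nat: "i * (m choose i) = m * ((m - 1) choose (i - 1))"
    using assms times_binomial_minus1_eq by simp
  have r: "- (of_nat ((m - 1) choose (i - 1)) :: rat) = of_nat i * (- of_nat (m choose i) / of_nat m)"
  proof -
    have "(of_nat i * of_nat (m choose i) :: rat) = of_nat m * of_nat ((m - 1) choose (i - 1))"
      using nat by (metis of_nat_mult)
    then show ?thesis using m3 by (simp add: field_simps)
  qed
  have s: "((-1) ^ (i - 1) * (-1) ^ i :: M1) = -1"
  proof -
    obtain k where k: "i = Suc k" using assms by (cases i) auto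
    have "((-1) ^ k * (-1) ^ k :: M1) = (-1) ^ (k + k)" by (simp add: power_add)
    also have "\<dots> = 1" by simp
    finally show ?thesis using k by simp
  qed
  have "(-1) ^ (i - 1) * delta m (H_a i) = fps_X ^ (m - i) * fps_const (((-1) ^ (i - 1) * (-1) ^ i) * of_nat ((m - 1) choose (i - 1)))"
    using True assms by (simp add: delta_H fps_const_mult[symmetric] fps_const_power[symmetric] fps_const_neg[symmetric] algebra_simps del: fps_const_mult)
  also have "\<dots> = fps_X ^ (m - i) * fps_const (mconst (- (of_nat ((m - 1) choose (i - 1)))))"
    unfolding s by (simp add: mconst_uminus mconst_of_nat)
  also have "\<dots> = fps_X ^ (m - i) * fps_const (of_nat i * kap i)"
  proof -
    have "mconst (- of_nat ((m - 1) choose (i - 1))) = of_nat i * kap i"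
      unfolding kap_def by (simp only: r mconst_mult mconst_of_nat)
    then show ?thesis by simp
  qed
  also have "\<dots> = of_nat i * dd i"
    using True assms by (simp add: dd_def fps_const_mult[symmetric] fps_of_nat algebra_simps del: fps_const_mult)
  finally show ?thesis .
qed (use assms in \<open>simp add: delta_H dd_def\<close>)


lemma delta_H1: "delta m (H1_a j) = (\<Sum>l=1..j. dd l * H1_a (j - l))"
proof (induction j rule: less_induct)
  case (less j)
  show ?case
  proof (cases j)
    case 0 then show ?thesis by simp
  next
    case (Suc n)
    define S where "S = (\<Sum>i=1..j. (-1) ^ (i - 1) * H_a i * H1_a (j - i))"
    have Hj: "H1_a j = fps_const (mconst (1 / of_nat j)) * S" using Suc by (simp add: S_def)
    have "delta m S = (\<Sum>i=1..j. (-1) ^ (i - 1) * delta m (H_a i) * H1_a (j - i))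
        + (\<Sum>i=1..j. (-1) ^ (i - 1) * H_a i * delta m (H1_a (j - i)))"
      by (simp add: S_def delta_sum delta_mult sum.distrib algebra_simps)
    also have "(\<Sum>i=1..j. (-1) ^ (i - 1) * delta m (H_a i) * H1_a (j - i))
        = (\<Sum>l=1..j. of_nat l * dd l * H1_a (j - l))"
    proof (rule sum.cong)
      fix l assume "l \<in> {1..j}"
      then have "(-1) ^ (l - 1) * delta m (H_a l) = of_nat l * dd l" by (intro delta_H_dd) auto
      then show "(-1) ^ (l - 1) * delta m (H_a l) * H1_a (j - l) = of_nat l * dd l * H1_a (j - l)" by simp
    qed simp
    also have "(\<Sum>i=1..j. (-1) ^ (i - 1) * H_a i * delta m (H1_a (j - i)))
        = (\<Sum>i=1..j. \<Sum>l=1..j-i. (-1) ^ (i - 1) * H_a i * (dd l * H1_a (j - i - l)))"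
    proof (rule sum.cong)
      fix i assume "i \<in> {1..j}"
      then have "j - i < j" by auto
      then show "(-1) ^ (i - 1) * H_a i * delta m (H1_a (j - i)) =
          (\<Sum>l=1..j-i. (-1) ^ (i - 1) * H_a i * (dd l * H1_a (j - i - l)))"
        using less.IH[of "j - i"] by (simp add: sum_distrib_left)
    qed simp
    also have "\<dots> = (\<Sum>l=1..j. \<Sum>i=1..j-l. (-1) ^ (i - 1) * H_a i * (dd l * H1_a (j - i - l)))"
      by (rule sum_swap_tri)
    also have "\<dots> = (\<Sum>l=1..j. of_nat (j - l) * dd l * H1_a (j - l))"
    proof (rule sum.cong)
      fix l assume "l \<in> {1..j}"
      have "(\<Sum>i=1..j-l. (-1) ^ (i - 1) * H_a i * (dd l * H1_a (j - i - l)))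
          = dd l * (\<Sum>i=1..j-l. (-1) ^ (i - 1) * H_a i * H1_a (j - l - i))"
        by (simp add: sum_distrib_left algebra_simps diff_commute)
      also have "\<dots> = dd l * (of_nat (j - l) * H1_a (j - l))"
        by (simp only: newton)
      finally show "(\<Sum>i=1..j-l. (-1) ^ (i - 1) * H_a i * (dd l * H1_a (j - i - l))) =
          of_nat (j - l) * dd l * H1_a (j - l)" by (simp add: algebra_simps)
    qed simp
    also have "(\<Sum>l=1..j. of_nat l * dd l * H1_a (j - l)) + (\<Sum>l=1..j. of_nat (j - l) * dd l * H1_a (j - l))
        = of_nat j * (\<Sum>l=1..j. dd l * H1_a (j - l))"
      unfolding sum.distrib[symmetric] sum_distrib_left
    proof (rule sum.cong)
      fix l assume "l \<in> {1..j}"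
      then have "(of_nat l + of_nat (j - l) :: M1 fps) = of_nat j"
        by (simp flip: of_nat_add)
      then show "of_nat l * dd l * H1_a (j - l) + of_nat (j - l) * dd l * H1_a (j - l) =
          of_nat j * (dd l * H1_a (j - l))"
        by (metis distrib_right mult.assoc)
    qed simp
    finally have dS: "delta m S = of_nat j * (\<Sum>l=1..j. dd l * H1_a (j - l))" .
    have one: "fps_const (mconst (1 / of_nat j)) * (of_nat j :: M1 fps) = 1"
      using Suc by (simp only: fps_of_nat[symmetric] fps_const_mult mult.commute[of "mconst _"] mconst_inv_nat) simp
    show ?thesis
      unfolding Hj delta_mult dS by (simp add: mult.assoc[symmetric] one)
  qed
qed

end


lemma reindex_main:
  fixes g :: "nat \<Rightarrow> nat \<Rightarrow> 'a::comm_ring_1" and kap :: "nat \<Rightarrow> 'a"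
  assumes "1 \<le> m"
  shows "(\<Sum>j\<le>k. w ^ j * (\<Sum>l=1..j. if l < m \<and> m - l \<le> k - j then kap l * g (j - l) (k - j - (m - l)) else 0))
    = (if k < m then 0 else (\<Sum>l=1..m-1. kap l * w ^ l) * (\<Sum>j'\<le>k-m. w ^ j' * g j' (k - m - j')))"
proof -
  define S where "S = {(j, l). j \<le> k \<and> 1 \<le> l \<and> l \<le> j \<and> l < m \<and> m - l \<le> k - j}"
  define F where "F = (\<lambda>(j, l). w ^ j * (kap l * g (j - l) (k - j - (m - l))))"
  have "(\<Sum>j\<le>k. w ^ j * (\<Sum>l=1..j. if l < m \<and> m - l \<le> k - j then kap l * g (j - l) (k - j - (m - l)) else 0))
      = (\<Sum>(j,l)\<in>(SIGMA j:{..k}. {1..j}). if l < m \<and> m - l \<le> k - j then w ^ j * (kap l * g (j - l) (k - j - (m - l))) else 0)"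
    by (subst sum.Sigma[symmetric]) (auto simp: sum_distrib_left intro!: sum.cong)
  also have "\<dots> = sum F S"
    by (rule sum.mono_neutral_cong_right) (auto simp: S_def F_def split: if_splits)
  finally have L: "(\<Sum>j\<le>k. w ^ j * (\<Sum>l=1..j. if l < m \<and> m - l \<le> k - j then kap l * g (j - l) (k - j - (m - l)) else 0)) = sum F S" .
  show ?thesis
  proof (cases "k < m")
    case True
    then have "S = {}" by (auto simp: S_def)
    then show ?thesis using L True by simp
  next
    case False
    define T where "T = {1..m-1} \<times> {..k-m}"
    have "(\<Sum>l=1..m-1. kap l * w ^ l) * (\<Sum>j'\<le>k-m. w ^ j' * g j' (k - m - j'))
        = (\<Sum>(l,j')\<in>T. kap l * w ^ l * (w ^ j' * g j' (k - m - j')))"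
      unfolding T_def by (simp add: sum_product sum.cartesian_product)
    also have "\<dots> = sum F S"
    proof (rule sum.reindex_bij_witness[where i="\<lambda>(j,l). (l, j - l)" and j="\<lambda>(l,j'). (j' + l, l)"])
      fix a assume "a \<in> S" then show "(\<lambda>(l, j'). (j' + l, l)) ((\<lambda>(j, l). (l, j - l)) a) = a"
        by (auto simp: S_def)
    next
      fix a assume "a \<in> S" then show "(\<lambda>(j, l). (l, j - l)) a \<in> T"
        by (auto simp: S_def T_def)
    next
      fix b assume "b \<in> T" then show "(\<lambda>(j, l). (l, j - l)) ((\<lambda>(l, j'). (j' + l, l)) b) = b"
        by (cases b) auto
    next
      fix b assume "b \<in> T" then show "(\<lambda>(l, j'). (j' + l, l)) b \<in> S"
        using False by (auto simp: S_def T_def)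
    next
      fix b assume "b \<in> T"
      then obtain l j' where a: "b = (l, j')" "1 \<le> l" "l \<le> m - 1" "j' \<le> k - m"
        by (auto simp: T_def)
      then have e1: "k - (j' + l) - (m - l) = k - m - j'" using False by linarith
      show "F ((\<lambda>(l, j'). (j' + l, l)) b) = (case b of (l, j') \<Rightarrow> kap l * w ^ l * (w ^ j' * g j' (k - m - j')))"
        using a by (simp add: F_def e1 power_add algebra_simps)
    qed
    finally show ?thesis using L False by simp
  qed
qed



context
  fixes m :: nat
  assumes modd: "odd m" and m3: "3 \<le> m"
begin

lemma dd_mult_nth:
  assumes "1 \<le> l"
  shows "(dd m l * f) $ r = (if l < m \<and> m - l \<le> r then kap m l * f $ (r - (m - l)) else 0)"
  using assms by (auto simp: dd_def[OF modd m3] fps_X_power_mult_nth mult.assoc)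

definition Lam :: "nat \<Rightarrow> M1" where
  "Lam n = (\<Sum>l=1..m-1. kap m l * of_nat (n - 1) ^ l)"

lemma delta_c:
  "delta m (c_a n) = c_a n * (fps_X ^ m * fps_const (Lam n))"
proof (rule fps_ext)
  fix k
  define w :: M1 where "w = of_nat (n - 1)"
  have "delta m (c_a n) $ k = of_nat n * (\<Sum>j\<le>k. w ^ j * pderiv_var m (H1_a j $ (k - j)))"
    by (simp add: c_a_def pderiv_var_const_mult pderiv_var_sum w_def of_nat_power pderiv_var_const_mult[OF pderiv_var_power0[OF pderiv_var_of_nat]])
  also have "\<dots> = of_nat n * (\<Sum>j\<le>k. w ^ j * (\<Sum>l=1..j. if l < m \<and> m - l \<le> k - j then kap m l * H1_a (j - l) $ (k - j - (m - l)) else 0))"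
  proof -
    have "pderiv_var m (H1_a j $ (k - j)) = (\<Sum>l=1..j. if l < m \<and> m - l \<le> k - j then kap m l * H1_a (j - l) $ (k - j - (m - l)) else 0)" for j
    proof -
      have "pderiv_var m (H1_a j $ (k - j)) = delta m (H1_a j) $ (k - j)" by simp
      also have "\<dots> = (\<Sum>l=1..j. (dd m l * H1_a (j - l)) $ (k - j))"
        by (simp add: delta_H1[OF modd m3] fps_sum_nth)
      also have "\<dots> = (\<Sum>l=1..j. if l < m \<and> m - l \<le> k - j then kap m l * H1_a (j - l) $ (k - j - (m - l)) else 0)"
        by (rule sum.cong) (simp_all add: dd_mult_nth)
      finally show ?thesis .
    qed
    then show ?thesis by simp
  qed
  also have "\<dots> = of_nat n * (if k < m then 0 else (\<Sum>l=1..m-1. kap m l * w ^ l) * (\<Sum>j'\<le>k-m. w ^ j' * H1_a j' $ (k - m - j')))"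
    using m3 by (subst reindex_main[where g="\<lambda>a b. H1_a a $ b"]) auto
  also have "\<dots> = (c_a n * (fps_X ^ m * fps_const (Lam n))) $ k"
  proof -
    have "c_a n * (fps_X ^ m * fps_const (Lam n)) = fps_X ^ m * (fps_const (Lam n) * c_a n)"
      by (simp add: algebra_simps)
    then show ?thesis
      by (simp add: fps_X_power_mult_nth c_a_def Lam_def w_def of_nat_power algebra_simps)
  qed
  finally show "delta m (c_a n) $ k = (c_a n * (fps_X ^ m * fps_const (Lam n))) $ k" .
qed

end


lemma binom_mid:
  fixes x :: rat
  assumes "2 \<le> m"
  shows "(\<Sum>l=1..m-1. of_nat (m choose l) * x ^ l) = (x + 1) ^ m - 1 - x ^ m"
proof -
  have set: "{..m} = insert 0 (insert m {1..m-1})" using assms by auto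
  have "(x + 1) ^ m = (\<Sum>l\<le>m. of_nat (m choose l) * x ^ l)"
    by (simp add: binomial_ring)
  also have "\<dots> = 1 + (x ^ m + (\<Sum>l=1..m-1. of_nat (m choose l) * x ^ l))"
    unfolding set using assms by (subst sum.insert; simp)+
  finally show ?thesis by simp
qed

lemma mconst_of_int: "mconst (of_int z) = of_int z"
  by (cases z rule: int_cases) (simp_all add: mconst_uminus mconst_of_nat mconst_add mconst_diff)

lemma c_a_nth0: "c_a n $ 0 = of_nat n"
  by (simp add: c_a_def)

lemma isunit_c_a: "1 \<le> n \<Longrightarrow> isunit (c_a n)"
  unfolding isunit_def
proof
  assume "1 \<le> n"
  then have "c_a n $ 0 * mconst (1 / of_nat n) = 1" by (simp add: c_a_nth0 mconst_inv_nat)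
  then show "c_a n * fps_right_inverse (c_a n) (mconst (1 / of_nat n)) = 1"
    by (rule fps_right_inverse)
qed

context
  fixes m :: nat
  assumes modd: "odd m" and m3: "3 \<le> m"
begin

definition lam :: "nat \<Rightarrow> rat" where
  "lam n = - ((of_nat n) ^ m - 1 - (of_nat n - 1) ^ m) / of_nat m"

lemma Lam_eq: "1 \<le> n \<Longrightarrow> Lam m n = mconst (lam n)"
proof -
  assume n: "1 \<le> n"
  have "Lam m n = (\<Sum>l=1..m-1. mconst (- of_nat (m choose l) / of_nat m) * of_nat (n - 1) ^ l)"
    by (simp only: Lam_def[OF modd m3] kap_def[OF modd m3])
  also have "\<dots> = mconst (\<Sum>l=1..m-1. (- of_nat (m choose l) / of_nat m) * of_nat (n - 1) ^ l)"
    by (simp only: mconst_sum mconst_mult mconst_power mconst_of_nat)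
  also have "(\<Sum>l=1..m-1. (- of_nat (m choose l) / of_nat m) * (of_nat (n - 1) :: rat) ^ l)
      = - (\<Sum>l=1..m-1. of_nat (m choose l) * (of_nat (n - 1)) ^ l) / of_nat m"
    by (simp add: sum_divide_distrib sum_negf)
  also have "\<dots> = lam n"
  proof -
    have b: "(\<Sum>l=1..m-1. of_nat (m choose l) * (of_nat (n - 1) :: rat) ^ l) = (of_nat (n - 1) + 1) ^ m - 1 - (of_nat (n - 1)) ^ m"
      by (rule binom_mid) (use m3 in simp)
    have c: "(of_nat (n - 1) + 1 :: rat) = of_nat n" using n by (simp add: of_nat_diff)
    show ?thesis unfolding b c using n by (simp add: lam_def of_nat_diff)
  qed
  finally show ?thesis .
qed

lemma LD_c: "1 \<le> n \<Longrightarrow> delta m (c_a n) = c_a n * (fps_X ^ m * fps_const (mconst (lam n)))"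
  using delta_c[OF modd m3, of n] Lam_eq by simp

lemma telescope: "(\<Sum>j=1..b. lam j) = - (of_nat b ^ m - of_nat b) / of_nat m"
proof (induction b)
  case 0 then show ?case using m3 by simp
next
  case (Suc b)
  then show ?case using m3 by (simp add: lam_def field_simps)
qed

end


definition K :: "nat \<Rightarrow> rat \<Rightarrow> M1 fps" where "K m a = fps_X ^ m * fps_const (mconst a)"

lemma K_add: "K m (a + b) = K m a + K m b"
  by (simp add: K_def mconst_add distrib_left fps_const_add[symmetric] del: fps_const_add)

lemma K_zero[simp]: "K m 0 = 0" by (simp add: K_def)

lemma K_sum: "K m (sum g A) = (\<Sum>x\<in>A. K m (g x))"
  by (induction A rule: infinite_finite_induct) (simp_all add: K_add)

lemma K_of_int: "of_int z * K m a = K m (of_int z * a)"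
  by (simp add: K_def mconst_mult mconst_of_int fps_of_int[symmetric] algebra_simps
      fps_const_mult[symmetric] del: fps_const_mult)

theorem mainTheorem12:
  fixes k :: nat and b :: "nat \<Rightarrow> nat" and n :: "nat \<Rightarrow> int" and m :: nat
  assumes "\<forall>i\<in>{1..k}. 0 < b i"
    and "(\<Sum>i = 1..k. n i * int (b i)) = 0"
    and "odd m" and "3 \<le> m"
  shows "let \<alpha> = (\<Prod>i = 1..k. int_pow (\<Prod>j = 1..b i. c_a j) (n i)) in
         delta m \<alpha> * unit_inv \<alpha> =
           - (fps_X ^ m * fps_const (mconst (1 / of_nat m))) *
             fps_const (mconst (of_int (\<Sum>i = 1..k. n i * int (b i) ^ m)))"
proof -
  note modd = assms(3) and m3 = assms(4)
  define \<alpha> where "\<alpha> = (\<Prod>i = 1..k. int_pow (\<Prod>j = 1..b i. c_a j) (n i))"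
  define L where "L = (\<lambda>i. of_int (n i) * (\<Sum>j=1..b i. K m (lam m j)))"
  have u1: "isunit (\<Prod>j = 1..b i. c_a j)" for i
    by (rule isunit_prod) (simp add: isunit_c_a)
  have d1: "delta m (\<Prod>j = 1..b i. c_a j) = (\<Prod>j = 1..b i. c_a j) * (\<Sum>j=1..b i. K m (lam m j))" for i
    by (rule LD_prod) (simp add: LD_c[OF modd m3] K_def)
  have d2: "delta m (int_pow (\<Prod>j = 1..b i. c_a j) (n i)) = int_pow (\<Prod>j = 1..b i. c_a j) (n i) * L i" for i
    unfolding L_def by (rule LD_int_pow[OF u1 d1])
  have da: "delta m \<alpha> = \<alpha> * sum L {1..k}"
    unfolding \<alpha>_def by (rule LD_prod) (rule d2)
  have ua: "isunit \<alpha>"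
    unfolding \<alpha>_def by (rule isunit_prod) (rule isunit_int_pow[OF u1])
  have lhs: "delta m \<alpha> * unit_inv \<alpha> = sum L {1..k}"
    using unit_inv_right[OF ua] da by (simp add: algebra_simps)
  have "sum L {1..k} = K m (\<Sum>i=1..k. of_int (n i) * (- (of_nat (b i) ^ m - of_nat (b i)) / of_nat m))"
    unfolding L_def K_sum
  proof (rule sum.cong)
    fix i
    have t: "(\<Sum>j=1..b i. lam m j) = - (of_nat (b i) ^ m - of_nat (b i)) / of_nat m"
      by (rule telescope[OF modd m3])
    show "of_int (n i) * (\<Sum>j = 1..b i. K m (lam m j)) = K m (of_int (n i) * (- (of_nat (b i) ^ m - of_nat (b i)) / of_nat m))"
      by (simp only: K_sum[symmetric] K_of_int t)
  qed simp
  also have "(\<Sum>i=1..k. of_int (n i) * (- (of_nat (b i) ^ m - of_nat (b i)) / of_nat m) :: rat)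
      = - (1 / of_nat m) * of_int (\<Sum>i = 1..k. n i * int (b i) ^ m)"
  proof -
    have z: "(\<Sum>i=1..k. of_int (n i) * (of_nat (b i) :: rat)) = 0"
    proof -
      have "(\<Sum>i=1..k. of_int (n i) * (of_nat (b i) :: rat)) = of_int (\<Sum>i=1..k. n i * int (b i))"
        by (simp add: of_int_sum)
      then show ?thesis using assms(2) by (metis of_int_0)
    qed
    have "(\<Sum>i=1..k. of_int (n i) * (- (of_nat (b i) ^ m - of_nat (b i)) / of_nat m) :: rat)
        = - (1 / of_nat m) * (\<Sum>i=1..k. of_int (n i) * of_nat (b i) ^ m) + (1 / of_nat m) * (\<Sum>i=1..k. of_int (n i) * of_nat (b i))"
    proof -
      have pt: "of_int (n i) * (- (of_nat (b i) ^ m - of_nat (b i)) / of_nat m) =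
          - (1 / of_nat m) * (of_int (n i) * of_nat (b i) ^ m) + (1 / of_nat m) * (of_int (n i) * (of_nat (b i) :: rat))" for i
        using m3 by (simp add: field_simps)
      show ?thesis by (simp only: pt sum.distrib sum_distrib_left)
    qed
    then show ?thesis using z by simp
  qed
  also have "K m (- (1 / of_nat m) * of_int (\<Sum>i = 1..k. n i * int (b i) ^ m)) =
      - (fps_X ^ m * fps_const (mconst (1 / of_nat m))) *
             fps_const (mconst (of_int (\<Sum>i = 1..k. n i * int (b i) ^ m)))"
    unfolding K_def mconst_mult mconst_uminus
    by (simp only: fps_const_mult[symmetric] fps_const_neg[symmetric] mult_minus_left mult_minus_right mult.assoc)
  finally show ?thesis using lhs by (simp add: \<alpha>_def Let_def)
qed


end
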